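(* Let $n,d\ge 1$, $r\in[0,1]$, $\omega\ge 0$, $\alpha\in(0,1]$, $K_\omega,K_\alpha>0$, and $0<\mu\le L\le nL$. Put $\mu^r_{\omega,\alpha}=\frac{rd}{(1-r)K_\omega+rK_\alpha}$ and $K^r=(1-r)K_\omega+rK_\alpha$. For $p,\tau\in(0,1]$ and $L_{\max}\in[L,nL]$ let $$T(p,\tau;L_{\max})=\max\Big\{\sqrt{\tfrac{L}{\alpha p\mu}},\sqrt{\tfrac{L}{\alpha\tau\mu}},\sqrt{\tfrac{\sqrt{LL_{\max}}(\omega+1)\sqrt{\omega\tau}}{\alpha\sqrt n\,\mu}},\sqrt{\tfrac{\sqrt{LL_{\max}}\sqrt{\omega+1}\sqrt{\omega\tau}}{\alpha\sqrt p\sqrt n\,\mu}},\sqrt{\tfrac{L_{\max}\omega(\omega+1)^2p}{n\mu}},\sqrt{\tfrac{L_{\max}\omega}{np\mu}},\tfrac1\alpha,\tfrac1\tau,\omega+1,\tfrac1p\Big\}$$ and $M(p,\tau;L_{\max})=\big((1-r)K_\omega+r(K_\alpha+pd)\big)\,T(p,\tau;L_{\max})+d$. Choose $$p^\star=\min\Big\{\frac{1}{\omega+1},\frac{1}{\mu^r_{\omega,\alpha}}\Big\}\quad(\text{with }1/0=+\infty),\qquad \tau^\star=\frac{(p^\star)^{1/3}}{(\omega+1)^{2/3}}.$$ Then, up to universal multiplicative constants (and logarithmic factors): (i) $(p^\star,\tau^\star)$ minimizes $\max_{L_{\max}\in[L,nL]}M(p,\tau;L_{\max})$ over $p,\tau\in(0,1]$;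 (ii) for every $L_{\max}\in[L,nL]$, $T(p^\star,\tau^\star;L_{\max})$ is of the order of $$T^{\mathrm{realistic}}=\max\Big\{\sqrt{\tfrac{L\max\{\omega+1,\mu^r_{\omega,\alpha}\}}{\alpha\mu}},\sqrt{\tfrac{L_{\max}\omega\max\{\omega+1,\mu^r_{\omega,\alpha}\}}{n\mu}},\tfrac1\alpha,\omega+1,\mu^r_{\omega,\alpha}\Big\};$$ (iii) the total communication complexity with this choice, $M(p^\star,\tau^\star;L_{\max})$, is of the order of $K^r\,T^{\mathrm{realistic}}+d$.
   Context: This concerns the method 2Direction for minimizing $f=\frac1n\sum_{i=1}^n f_i$ over $\mathbb R^d$ with $n$ workers, where each $f_i$ is $L_i$-smooth and convex, $L_{\max}=\max_i L_i$, $f$ is $L$-smooth and $\mu$-strongly convex (so that necessarily $L\le L_{\max}\le nL$). Workers use unbiased compressors with variance parameter $\omega$ (i.e. $\mathbb E[\mathcal C(x)]=x$, $\mathbb E\|\mathcal C(x)-x\|^2\le\omega\|x\|^2$) whose expected density (i.e. $\sup_x\mathbb E\|\mathcal C(x)\|_0$, the expected number of nonzero coordinates sent) is $K_\omega$; the server uses a biased compressor with contraction parameter $\alpha$ (i.e. $\mathbb E\|\mathcal C(x)-x\|^2\le(1-\alpha)\|x\|^2$) and expected density $K_\alpha$. The method has two hyper-parameters: a probability $p$ and a momentum $\tau$. Up to logarithmic factors, $T(p,\tau;L_{\max})$ is the number of iterations the method needs in the strongly convex case, and $M(p,\tau;L_{\max})$ is its total communication complexity $(1-r)\cdot(\text{worker-to-server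 cost})+r\cdot(\text{server-to-worker cost})$, where $r\in[0,1]$ weights the relative cost of the two directions (workers send $\Theta(K_\omega)$ coordinates per iteration; the server broadcasts $\Theta(K_\alpha)$ coordinates per iteration plus $\Theta(d)$ uncompressed coordinates with probability $p$; $d$ coordinates are sent at initialization). Here the ratio $L_{\max}/L$ is assumed unknown, hence the worst case over $L_{\max}\in[L,nL]$. "Of the order of" means equal up to universal positive multiplicative constants. *)

theory Defs
  imports Complex_Main
begin

definition mu_r :: "nat \<Rightarrow> real \<Rightarrow> real \<Rightarrow> real \<Rightarrow> real" where
  "mu_r d r Kw Ka = r * real d / ((1 - r) * Kw + r * Ka)"

definition K_r :: "real \<Rightarrow> real \<Rightarrow> real \<Rightarrow> real" where
  "K_r r Kw Ka = (1 - r) * Kw + r * Ka"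

definition T_iter :: "nat \<Rightarrow> real \<Rightarrow> real \<Rightarrow> real \<Rightarrow> real \<Rightarrow> real \<Rightarrow> real \<Rightarrow> real \<Rightarrow> real" where
  "T_iter n w a mu L p tau Lmax = Max
     { sqrt (L / (a * p * mu)),
       sqrt (L / (a * tau * mu)),
       sqrt (sqrt (L * Lmax) * (w + 1) * sqrt (w * tau) / (a * sqrt (real n) * mu)),
       sqrt (sqrt (L * Lmax) * sqrt (w + 1) * sqrt (w * tau) / (a * sqrt p * sqrt (real n) * mu)),
       sqrt (Lmax * w * (w + 1)^2 * p / (real n * mu)),
       sqrt (Lmax * w / (real n * p * mu)),
       1 / a, 1 / tau, w + 1, 1 / p }"

definition M_comm :: "nat \<Rightarrow> nat \<Rightarrow> real \<Rightarrow> real \<Rightarrow> real \<Rightarrow> real \<Rightarrow> real \<Rightarrow> real \<Rightarrow> real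
    \<Rightarrow> real \<Rightarrow> real \<Rightarrow> real \<Rightarrow> real" where
  "M_comm n d r w a Kw Ka mu L p tau Lmax =
     ((1 - r) * Kw + r * (Ka + p * real d)) * T_iter n w a mu L p tau Lmax + real d"

definition M_worst :: "nat \<Rightarrow> nat \<Rightarrow> real \<Rightarrow> real \<Rightarrow> real \<Rightarrow> real \<Rightarrow> real \<Rightarrow> real \<Rightarrow> real
    \<Rightarrow> real \<Rightarrow> real \<Rightarrow> real" where
  "M_worst n d r w a Kw Ka mu L p tau =
     (SUP Lmax \<in> {L .. real n * L}. M_comm n d r w a Kw Ka mu L p tau Lmax)"

text \<open>p_star = min(1/(w+1), 1/mu_r) with the convention 1/0 = +infinity.\<close>
definition p_star :: "nat \<Rightarrow> real \<Rightarrow> real \<Rightarrow> real \<Rightarrow> real \<Rightarrow> real" where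
  "p_star d r w Kw Ka =
     (if mu_r d r Kw Ka = 0 then 1 / (w + 1) else min (1 / (w + 1)) (1 / mu_r d r Kw Ka))"

definition tau_star :: "nat \<Rightarrow> real \<Rightarrow> real \<Rightarrow> real \<Rightarrow> real \<Rightarrow> real" where
  "tau_star d r w Kw Ka = p_star d r w Kw Ka powr (1/3) / (w + 1) powr (2/3)"

definition T_realistic :: "nat \<Rightarrow> nat \<Rightarrow> real \<Rightarrow> real \<Rightarrow> real \<Rightarrow> real \<Rightarrow> real \<Rightarrow> real \<Rightarrow> real
    \<Rightarrow> real \<Rightarrow> real" where
  "T_realistic n d r w a Kw Ka mu L Lmax = Max
     { sqrt (L * max (w + 1) (mu_r d r Kw Ka) / (a * mu)),
       sqrt (Lmax * w * max (w + 1) (mu_r d r Kw Ka) / (real n * mu)),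
       1 / a, w + 1, mu_r d r Kw Ka }"

definition params_ok :: "nat \<Rightarrow> nat \<Rightarrow> real \<Rightarrow> real \<Rightarrow> real \<Rightarrow> real \<Rightarrow> real \<Rightarrow> real \<Rightarrow> real \<Rightarrow> bool" where
  "params_ok n d r w a Kw Ka mu L \<longleftrightarrow>
     1 \<le> n \<and> 1 \<le> d \<and> 0 \<le> r \<and> r \<le> 1 \<and> 0 \<le> w \<and> 0 < a \<and> a \<le> 1 \<and>
     0 < Kw \<and> 0 < Ka \<and> 0 < mu \<and> mu \<le> L"

end

theory Submission imports Defs begin
lemma sqrt_le_of_sq: "0 \<le> y \<Longrightarrow> x \<le> y^2 \<Longrightarrow> sqrt x \<le> y"
  by (metis real_sqrt_abs real_sqrt_le_mono abs_of_nonneg)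

lemma tau_bounds:
  fixes p w tau :: real
  assumes p: "0 < p" "p * (w+1) \<le> 1" and w: "0 \<le> w"
    and tau: "tau = p powr (1/3) / (w+1) powr (2/3)"
  shows "p \<le> tau" "tau * (w+1) \<le> 1" "0 < tau"
proof -
  define s where "s = p powr (1/3)"
  define t where "t = (w+1) powr (1/3)"
  have s0: "s > 0" using p by (simp add: s_def)
  have t0: "t > 0" using w by (simp add: t_def)
  have s3: "s^3 = p"
  proof -
    have "s^3 = s powr (real 3)" using s0 by (simp add: powr_realpow)
    also have "\<dots> = p" using p by (simp add: s_def powr_powr)
    finally show ?thesis .
  qed
  have t3: "t^3 = w+1"
  proof -
    have "t^3 = t powr (real 3)" using t0 by (simp add: powr_realpow)
    also have "\<dots> = w+1" using w by (simp add: t_def powr_powr)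
    finally show ?thesis .
  qed
  have t2: "t^2 = (w+1) powr (2/3)"
  proof -
    have "t^2 = t powr (real 2)" using t0 by (simp add: powr_realpow)
    also have "\<dots> = (w+1) powr (2/3)" using w by (simp add: t_def powr_powr)
    finally show ?thesis .
  qed
  have taust: "tau = s / t^2" using tau t2 s_def by simp
  have "(s*t)^3 \<le> 1" using p s3 t3 by (simp add: power_mult_distrib)
  hence st: "s*t \<le> 1" using s0 t0
    by (metis power_le_one_iff mult_nonneg_nonneg less_imp_le zero_neq_numeral)
  have st2: "s*t*(s*t) \<le> 1" using st s0 t0
    by (metis mult_le_one less_imp_le mult_nonneg_nonneg)
  show "0 < tau" using taust s0 t0 by simp
  show "p \<le> tau" unfolding taust s3[symmetric] using s0 t0 st2
    by (simp add: field_simps power3_eq_cube power2_eq_square)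
  show "tau * (w+1) \<le> 1" unfolding taust t3[symmetric] using s0 t0 st
    by (simp add: field_simps power3_eq_cube power2_eq_square)
qed
lemma part2_core:
  fixes N L Lmax mu a w m tau P p :: real
  assumes N: "1 \<le> N" and L: "0 < L" "L \<le> Lmax" "Lmax \<le> N*L" and mu: "0<mu" and a: "0<a"
    and w: "0\<le>w" and m: "0 \<le> m"
    and P: "P = max (w+1) m" and pP: "p = 1/P" and tau: "p \<le> tau" "tau*(w+1) \<le> 1"
  shows "max (sqrt (L / (a * p * mu))) (max (sqrt (L / (a * tau * mu)))
     (max (sqrt (sqrt (L * Lmax) * (w + 1) * sqrt (w * tau) / (a * sqrt N * mu)))
     (max (sqrt (sqrt (L * Lmax) * sqrt (w + 1) * sqrt (w * tau) / (a * sqrt p * sqrt N * mu)))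
     (max (sqrt (Lmax * w * (w + 1)^2 * p / (N * mu)))
     (max (sqrt (Lmax * w / (N * p * mu)))
     (max (1/a) (max (1/tau) (max (w+1) (1/p)))))))))
   = max (sqrt (L * P / (a*mu))) (max (sqrt (Lmax*w*P/(N*mu))) (max (1/a) (max (w+1) m)))"
  (is "?T = ?R")
proof -
  define RR where "RR = ?R"
  have P1: "P \<ge> w+1" "P \<ge> m" "P > 0" using P w by auto
  have p0: "p > 0" using pP P1 by simp
  have t0: "tau > 0" using p0 tau by simp
  have ip: "1/p = P" using pP by simp
  have A1: "sqrt (L / (a * p * mu)) = sqrt (L * P / (a*mu))"
  proof -
    have "L / (a * p * mu) = L * P / (a*mu)" using P1 by (simp add: pP)
    thus ?thesis by simp
  qed
  have A6: "sqrt (Lmax * w / (N * p * mu)) = sqrt (Lmax*w*P/(N*mu))" using P1 by (simp add: pP)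
  have R1: "sqrt (L * P / (a*mu)) \<le> RR" unfolding RR_def by simp
  have R2: "sqrt (Lmax*w*P/(N*mu)) \<le> RR" unfolding RR_def by simp
  have R3: "1/a \<le> RR" "w+1 \<le> RR" "m \<le> RR" unfolding RR_def by simp_all
  have B2: "sqrt (L / (a * tau * mu)) \<le> RR"
  proof -
    have "L / (a * tau * mu) \<le> L / (a * p * mu)"
      using tau p0 L a mu by (intro divide_left_mono mult_right_mono mult_left_mono mult_pos_pos) auto
    hence "sqrt (L / (a * tau * mu)) \<le> sqrt (L / (a * p * mu))" by simp
    thus ?thesis using A1 R1 by linarith
  qed
  have u: "sqrt (L * Lmax) \<le> L * sqrt N"
  proof -
    have "sqrt (L*Lmax) \<le> sqrt (L * (N*L))" using L by (intro real_sqrt_le_mono mult_left_mono) auto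
    also have "\<dots> = L * sqrt N" using L by (simp add: real_sqrt_mult power2_eq_square[symmetric] mult.commute mult.left_commute)
    finally show ?thesis .
  qed
  have sN: "sqrt N > 0" using N by simp
  have v: "sqrt (w*tau) \<le> 1" "0 \<le> sqrt (w*tau)" using tau t0 w by (auto simp: algebra_simps)
  have B3: "sqrt (sqrt (L * Lmax) * (w + 1) * sqrt (w * tau) / (a * sqrt N * mu)) \<le> RR"
  proof -
    have "sqrt (L * Lmax) * (w + 1) * sqrt (w * tau) \<le> (L * sqrt N) * P * 1"
      using u v P1 w L sN by (intro mult_mono) (auto intro: mult_nonneg_nonneg)
    hence "sqrt (L * Lmax) * (w + 1) * sqrt (w * tau) / (a * sqrt N * mu) \<le> (L * sqrt N) * P * 1 / (a * sqrt N * mu)"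
      using a sN mu by (intro divide_right_mono) auto
    also have "\<dots> = L * P / (a*mu)" using sN by (simp add: field_simps)
    finally show ?thesis using R1 by (meson order_trans real_sqrt_le_mono)
  qed
  have B4: "sqrt (sqrt (L * Lmax) * sqrt (w + 1) * sqrt (w * tau) / (a * sqrt p * sqrt N * mu)) \<le> RR"
  proof -
    have q: "sqrt (w+1) \<le> P * sqrt p"
    proof -
      have "sqrt (w+1) \<le> sqrt P" using P1 by simp
      also have "sqrt P = P * sqrt p" using pP P1 
        by (metis real_sqrt_divide real_sqrt_one divide_divide_eq_right real_div_sqrt less_imp_le times_divide_eq_right mult_1_right)
      finally show ?thesis .
    qed
    have "sqrt (L * Lmax) * sqrt (w + 1) * sqrt (w * tau) \<le> (L * sqrt N) * (P * sqrt p) * 1"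
      using u v q w L sN P1 p0 by (intro mult_mono) (auto intro: mult_nonneg_nonneg)
    hence "sqrt (L * Lmax) * sqrt (w + 1) * sqrt (w * tau) / (a * sqrt p * sqrt N * mu) \<le> (L * sqrt N) * (P * sqrt p) * 1 / (a * sqrt p * sqrt N * mu)"
      using a sN mu p0 by (intro divide_right_mono) auto
    also have "\<dots> = L * P / (a*mu)" using sN p0 by (simp add: field_simps)
    finally show ?thesis using R1 by (meson order_trans real_sqrt_le_mono)
  qed
  have B5: "sqrt (Lmax * w * (w + 1)^2 * p / (N * mu)) \<le> RR"
  proof -
    have "(w+1)^2 * p \<le> P"
    proof -
      have "(w+1)^2 \<le> P^2" using P1 w by (intro power_mono) auto
      hence "(w+1)^2 / P \<le> P^2 / P" using P1 by (intro divide_right_mono) auto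
      also have "P^2 / P = P" using P1 by (simp add: power2_eq_square)
      finally show ?thesis by (simp add: pP)
    qed
    hence "Lmax * w * ((w + 1)^2 * p) \<le> Lmax * w * P" using L w by (intro mult_left_mono) auto
    hence "Lmax * w * (w + 1)^2 * p / (N * mu) \<le> Lmax*w*P/(N*mu)" using N mu
      by (intro divide_right_mono) (auto simp: mult.assoc)
    thus ?thesis using R2 by (meson order_trans real_sqrt_le_mono)
  qed
  have B8: "1/tau \<le> RR"
  proof -
    have "1/tau \<le> 1/p" using tau p0 by (simp add: frac_le)
    thus ?thesis using ip P R3 by linarith
  qed
  have B10: "1/p \<le> RR" using ip P R3 by linarith
  have le: "?T \<le> RR"
    apply (intro max.boundedI)
    subgoal using A1 R1 by linarith
    subgoal by (fact B2)
    subgoal by (fact B3)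
    subgoal by (fact B4)
    subgoal by (fact B5)
    subgoal using A6 R2 by linarith
    subgoal by (fact R3(1))
    subgoal by (fact B8)
    subgoal by (fact R3(2))
    subgoal by (fact B10)
    done
  have ge: "RR \<le> ?T"
    unfolding RR_def
    apply (intro max.boundedI)
    subgoal by (rule max.coboundedI1) (simp add: A1)
    subgoal by (rule max.coboundedI2, rule max.coboundedI2, rule max.coboundedI2, rule max.coboundedI2, rule max.coboundedI2, rule max.coboundedI1) (simp add: A6)
    subgoal by (rule max.coboundedI2, rule max.coboundedI2, rule max.coboundedI2, rule max.coboundedI2, rule max.coboundedI2, rule max.coboundedI2, rule max.coboundedI1) simp
    subgoal by (rule max.coboundedI2, rule max.coboundedI2, rule max.coboundedI2, rule max.coboundedI2, rule max.coboundedI2, rule max.coboundedI2, rule max.coboundedI2, rule max.coboundedI2, rule max.coboundedI1) simp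
    subgoal by (rule max.coboundedI2, rule max.coboundedI2, rule max.coboundedI2, rule max.coboundedI2, rule max.coboundedI2, rule max.coboundedI2, rule max.coboundedI2, rule max.coboundedI2, rule max.coboundedI2) (simp add: ip P1)
    done
  show ?thesis unfolding RR_def[symmetric] by (rule antisym[OF le ge])
qed
lemma aux1:
  fixes p q X :: real
  assumes "0 < p" "0 \<le> X" "p*q \<le> 1"
  shows "X*q \<le> X/p"
proof -
  have "X*q = X*(p*q)/p" using assms(1) by simp
  also have "\<dots> \<le> X*1/p" using assms by (intro divide_right_mono mult_left_mono) auto
  finally show ?thesis by simp
qed

lemma part1_core:
  fixes N L mu a w m tau P p :: real
  assumes N: "1 \<le> N" and L: "0 < L" and mu: "0<mu" and a: "0<a"
    and w: "0\<le>w" and m: "0 \<le> m"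
    and P: "P = max (w+1) m" and p: "0 < p" "p \<le> 1" and tau: "0 < tau" "tau \<le> 1"
    and Tv: "Tv = max (sqrt (L / (a * p * mu))) (max (sqrt (L / (a * tau * mu)))
     (max (sqrt (sqrt (L * (N*L)) * (w + 1) * sqrt (w * tau) / (a * sqrt N * mu)))
     (max (sqrt (sqrt (L * (N*L)) * sqrt (w + 1) * sqrt (w * tau) / (a * sqrt p * sqrt N * mu)))
     (max (sqrt ((N*L) * w * (w + 1)^2 * p / (N * mu)))
     (max (sqrt ((N*L) * w / (N * p * mu)))
     (max (1/a) (max (1/tau) (max (w+1) (1/p)))))))))"
  shows "max (sqrt (L * P / (a*mu))) (max (sqrt ((N*L)*w*P/(N*mu))) (max (1/a) (max (w+1) m)))
     \<le> 2 * (1 + p*m) * Tv"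
proof -
  define A1 where "A1 = sqrt (L / (a * p * mu))"
  define A2 where "A2 = sqrt (L / (a * tau * mu))"
  define A3 where "A3 = sqrt (sqrt (L * (N*L)) * (w + 1) * sqrt (w * tau) / (a * sqrt N * mu))"
  define A5 where "A5 = sqrt ((N*L) * w * (w + 1)^2 * p / (N * mu))"
  define A6 where "A6 = sqrt ((N*L) * w / (N * p * mu))"
  have T1: "A1 \<le> Tv" "A2 \<le> Tv" "A3 \<le> Tv" "A5 \<le> Tv" "A6 \<le> Tv" "1/a \<le> Tv" "w+1 \<le> Tv" "1/p \<le> Tv"
    unfolding Tv A1_def A2_def A3_def A5_def A6_def
    apply -
    subgoal by (rule max.cobounded1)
    subgoal by (rule max.coboundedI2, rule max.cobounded1)
    subgoal by (rule max.coboundedI2, rule max.coboundedI2, rule max.cobounded1)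
    subgoal by (rule max.coboundedI2, rule max.coboundedI2, rule max.coboundedI2, rule max.coboundedI2, rule max.cobounded1)
    subgoal by (rule max.coboundedI2, rule max.coboundedI2, rule max.coboundedI2, rule max.coboundedI2, rule max.coboundedI2, rule max.cobounded1)
    subgoal by (rule max.coboundedI2, rule max.coboundedI2, rule max.coboundedI2, rule max.coboundedI2, rule max.coboundedI2, rule max.coboundedI2, rule max.cobounded1)
    subgoal by (rule max.coboundedI2, rule max.coboundedI2, rule max.coboundedI2, rule max.coboundedI2, rule max.coboundedI2, rule max.coboundedI2, rule max.coboundedI2, rule max.coboundedI2, rule max.cobounded1)
    subgoal by (rule max.coboundedI2, rule max.coboundedI2, rule max.coboundedI2, rule max.coboundedI2, rule max.coboundedI2, rule max.coboundedI2, rule max.coboundedI2, rule max.coboundedI2, rule max.cobounded2)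
    done
  have Tpos: "0 < Tv" using T1(6) a by (meson order_less_le_trans zero_less_divide_1_iff)
  have k1: "1 \<le> 1 + p*m" using p m by simp
  have k2: "1 \<le> 2 * (1 + p*m)" using k1 by simp
  have k0: "0 \<le> m*p" "0 \<le> p*m" using p m by simp_all
  have A1sq: "A1^2 = L / (a * p * mu)" unfolding A1_def using L a p mu by simp
  have A2sq: "A2^2 = L / (a * tau * mu)" unfolding A2_def using L a tau mu by simp
  have S1: "sqrt (L*(w+1)/(a*mu)) \<le> 2 * Tv"
  proof (cases "p*(w+1) \<le> 1")
    case True
    have "L*(w+1)/(a*mu) \<le> A1^2"
    proof -
      have "(L/(a*mu))*(w+1) \<le> (L/(a*mu))/p" using True L a mu p by (intro aux1) auto
      thus ?thesis unfolding A1sq by (simp add: mult.commute mult.left_commute)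
    qed
    hence "sqrt (L*(w+1)/(a*mu)) \<le> A1" by (rule sqrt_le_of_sq[rotated]) (use L a p mu in \<open>simp add: A1_def\<close>)
    thus ?thesis using T1 Tpos by linarith
  next
    case F1: False
    show ?thesis
    proof (cases "tau*(w+1) \<le> 1")
      case True
      have "L*(w+1)/(a*mu) \<le> A2^2"
      proof -
        have "(L/(a*mu))*(w+1) \<le> (L/(a*mu))/tau" using True L a mu tau by (intro aux1) (auto simp: mult.commute)
        thus ?thesis unfolding A2sq by (simp add: mult.commute mult.left_commute)
      qed
      hence "sqrt (L*(w+1)/(a*mu)) \<le> A2" by (rule sqrt_le_of_sq[rotated]) (use L a tau mu in \<open>simp add: A2_def\<close>)
      thus ?thesis using T1 Tpos by linarith
    next
      case F2: False
      show ?thesis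
      proof (cases "w < 1")
        case True
        have "L*(w+1)/(a*mu) \<le> L*2/(a*mu)" using True L a mu
          by (intro divide_right_mono mult_left_mono) auto
        also have "\<dots> \<le> 4 * (L / (a*p*mu))" using p L a mu
          by (simp add: field_simps mult_left_mono)
        also have "\<dots> = (2*A1)^2" using A1sq by (simp add: power_mult_distrib)
        finally have "sqrt (L*(w+1)/(a*mu)) \<le> 2*A1" 
          by (rule sqrt_le_of_sq[rotated]) (use L a p mu in \<open>simp add: A1_def\<close>)
        thus ?thesis using T1 by linarith
      next
        case False
        have wt: "w*tau \<ge> 1/2"
        proof -
          have "w*tau*(w+1) \<ge> w" using mult_left_mono[of 1 "tau*(w+1)" w] F2 w by (simp add: mult.assoc)
          moreover have "(w+1)/2 \<le> w" using False by simp
          ultimately have "w*tau*(w+1) \<ge> (w+1)/2" by (rule order_trans[rotated])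
          thus ?thesis using w mult_le_cancel_right_pos[of "w+1" "1/2" "w*tau"] by simp
        qed
        have swt: "sqrt (w*tau) \<ge> 1/2"
        proof -
          have "sqrt (w*tau) \<ge> sqrt (1/4)" using wt by (intro real_sqrt_le_mono) auto
          moreover have "sqrt (1/4::real) = 1/2" by (simp add: real_sqrt_divide)
          ultimately show ?thesis by simp
        qed
        have sNL: "sqrt (L*(N*L)) = L * sqrt N" using L N
          by (simp add: real_sqrt_mult power2_eq_square[symmetric] mult.commute mult.left_commute)
        have sN: "sqrt N > 0" using N by simp
        have A3a: "sqrt (L * (N*L)) * (w + 1) * sqrt (w * tau) / (a * sqrt N * mu)
            = L * (w+1) * sqrt (w*tau) / (a*mu)"
        proof -
          define s where "s = sqrt N"
          have s0: "s \<noteq> 0" using sN s_def by simp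
          show ?thesis unfolding sNL s_def[symmetric] using s0 a mu by (simp add: field_simps)
        qed
        have "L*(w+1)/(a*mu) \<le> 2 * (L * (w+1) * sqrt (w*tau) / (a*mu))"
        proof -
          have "L*(w+1) \<le> 2 * (L*(w+1)*sqrt (w*tau))" using swt L w
            by (simp add: mult_left_mono)
          thus ?thesis using a mu by (simp add: divide_right_mono)
        qed
        also have "\<dots> \<le> 4 * A3^2"
        proof -
          have nn: "0 \<le> L*(w+1)*sqrt (w*tau)/(a*mu)" using L w a mu tau by (intro divide_nonneg_pos mult_nonneg_nonneg) auto
          show ?thesis unfolding A3_def A3a real_sqrt_pow2[OF nn] by (rule mult_right_mono[OF _ nn]) simp
        qed
        also have "\<dots> = (2*A3)^2" by (simp add: power_mult_distrib)
        finally have "sqrt (L*(w+1)/(a*mu)) \<le> 2*A3"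
          by (rule sqrt_le_of_sq[rotated]) (unfold A3_def A3a, use L w a mu tau in \<open>auto intro!: divide_nonneg_pos mult_nonneg_nonneg\<close>)
        thus ?thesis using T1 by linarith
      qed
    qed
  qed
  have pm: "p*m \<le> (1+p*m)^2" using p m by (simp add: power2_eq_square algebra_simps)
  have S2: "sqrt (L*m/(a*mu)) \<le> (1+p*m) * Tv"
  proof -
    have "L*m/(a*mu) = (p*m) * (L/(a*p*mu))" using p by (simp add: field_simps)
    also have "\<dots> \<le> (1+p*m)^2 * (L/(a*p*mu))" using pm L a p mu
      by (intro mult_right_mono) auto
    also have "\<dots> = ((1+p*m) * A1)^2" using A1sq by (simp add: power_mult_distrib)
    finally have "sqrt (L*m/(a*mu)) \<le> (1+p*m) * A1"
      by (rule sqrt_le_of_sq[rotated]) (unfold A1_def, use L a p mu m in \<open>auto intro!: mult_nonneg_nonneg divide_nonneg_pos\<close>)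
    also have "\<dots> \<le> (1+p*m) * Tv" using T1 k1 by (intro mult_left_mono) auto
    finally show ?thesis .
  qed
  have R1: "sqrt (L * P / (a*mu)) \<le> 2 * (1 + p*m) * Tv"
  proof (cases "m \<le> w+1")
    case True
    hence "P = w+1" using P by simp
    hence "sqrt (L * P / (a*mu)) \<le> 2 * Tv" using S1 by simp
    also have "\<dots> \<le> 2 * (1 + p*m) * Tv" using Tpos k1 k0 by simp
    finally show ?thesis .
  next
    case False
    hence "P = m" using P by simp
    hence "sqrt (L * P / (a*mu)) \<le> (1+p*m) * Tv" using S2 by simp
    also have "\<dots> \<le> 2 * (1 + p*m) * Tv" using Tpos k1 k0 by simp
    finally show ?thesis .
  qed
  have NLe: "(N*L)*w*X/(N*mu) = L*w*X/mu" for X using N by (simp add: field_simps)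
  have S3: "sqrt (L*w*(w+1)/mu) \<le> Tv"
  proof -
    have e5: "(N*L) * w * (w + 1)^2 * p / (N * mu) = L*w*(w+1)^2*p/mu" using N by (simp add: field_simps)
    have e6: "(N*L) * w / (N * p * mu) = L*w/(p*mu)" using N by (simp add: field_simps)
    define x where "x = L*w*(w+1)^2*p/mu"
    define y where "y = L*w/(p*mu)"
    have xy: "x \<ge> 0" "y \<ge> 0" unfolding x_def y_def using L w p mu by auto
    have "(L*w*(w+1)/mu)^2 = x*y" unfolding x_def y_def using p mu
      by (simp add: field_simps power2_eq_square)
    hence "L*w*(w+1)/mu = sqrt (x*y)" using L w mu
      by (metis real_sqrt_abs abs_of_nonneg divide_nonneg_pos mult_nonneg_nonneg less_imp_le add_nonneg_nonneg zero_le_one)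
    also have "\<dots> \<le> max x y"
    proof -
      have "x*y \<le> (max x y)^2" using xy by (simp add: power2_eq_square mult_mono)
      thus ?thesis by (rule sqrt_le_of_sq[rotated]) (use xy in auto)
    qed
    finally have "sqrt (L*w*(w+1)/mu) \<le> sqrt (max x y)" by simp
    also have "\<dots> = max A5 A6" unfolding A5_def A6_def e5 e6 x_def[symmetric] y_def[symmetric]
      by (simp add: max_def)
    finally show ?thesis using T1 by simp
  qed
  have S4: "sqrt (L*w*m/mu) \<le> (1+p*m) * Tv"
  proof -
    have e6: "(N*L) * w / (N * p * mu) = L*w/(p*mu)" using N by (simp add: field_simps)
    have A6sq: "A6^2 = L*w/(p*mu)" unfolding A6_def e6 using L w p mu by simp
    have "L*w*m/mu = (p*m) * (L*w/(p*mu))" using p by (simp add: field_simps)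
    also have "\<dots> \<le> (1+p*m)^2 * (L*w/(p*mu))" using pm L w p mu
      by (intro mult_right_mono) auto
    also have "\<dots> = ((1+p*m) * A6)^2" using A6sq by (simp add: power_mult_distrib)
    finally have "sqrt (L*w*m/mu) \<le> (1+p*m) * A6"
      by (rule sqrt_le_of_sq[rotated]) (unfold A6_def, use L w a p mu m N in \<open>auto intro!: mult_nonneg_nonneg divide_nonneg_pos\<close>)
    also have "\<dots> \<le> (1+p*m) * Tv" using T1 k1 by (intro mult_left_mono) auto
    finally show ?thesis .
  qed
  have R2: "sqrt ((N*L)*w*P/(N*mu)) \<le> 2 * (1 + p*m) * Tv"
  proof (cases "m \<le> w+1")
    case True
    hence "P = w+1" using P by simp
    hence "sqrt ((N*L)*w*P/(N*mu)) \<le> Tv" using S3 NLe by simp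
    also have "\<dots> \<le> 2 * (1 + p*m) * Tv" using Tpos k2 k0 by simp
    finally show ?thesis .
  next
    case False
    hence "P = m" using P by simp
    hence "sqrt ((N*L)*w*P/(N*mu)) \<le> (1+p*m) * Tv" using S4 NLe by simp
    also have "\<dots> \<le> 2 * (1 + p*m) * Tv" using Tpos k1 k0 by simp
    finally show ?thesis .
  qed
  have kT: "Tv \<le> 2 * (1 + p*m) * Tv" using mult_right_mono[OF k2, of Tv] Tpos by simp
  have R3: "1/a \<le> 2 * (1 + p*m) * Tv" using T1(6) kT by linarith
  have R4: "w+1 \<le> 2 * (1 + p*m) * Tv" using T1(7) kT by linarith
  have R5: "m \<le> 2 * (1 + p*m) * Tv"
  proof -
    have "m \<le> (1+p*m) * (1/p)" using p m by (simp add: field_simps)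
    also have "\<dots> \<le> (1+p*m) * Tv" using T1 k1 by (intro mult_left_mono) auto
    also have "\<dots> \<le> 2 * (1 + p*m) * Tv" using Tpos k1 k0 by simp
    finally show ?thesis .
  qed
  show ?thesis using R1 R2 R3 R4 R5 by (intro max.boundedI)
qed
lemma Max10: "Max {a1,a2,a3,a4,a5,a6,a7,a8,a9,a10::real} = max a1 (max a2 (max a3 (max a4 (max a5 (max a6 (max a7 (max a8 (max a9 a10))))))))"
  by (simp only: Max_insert finite_insert finite.emptyI insert_not_empty Max_singleton simp_thms)

lemma Max5: "Max {a1,a2,a3,a4,a5::real} = max a1 (max a2 (max a3 (max a4 a5)))"
  by (simp only: Max_insert finite_insert finite.emptyI insert_not_empty Max_singleton simp_thms)

lemma T_expr: "T_iter n w a mu L p tau Lmax = max (sqrt (L / (a * p * mu))) (max (sqrt (L / (a * tau * mu)))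
     (max (sqrt (sqrt (L * Lmax) * (w + 1) * sqrt (w * tau) / (a * sqrt (real n) * mu)))
     (max (sqrt (sqrt (L * Lmax) * sqrt (w + 1) * sqrt (w * tau) / (a * sqrt p * sqrt (real n) * mu)))
     (max (sqrt (Lmax * w * (w + 1)^2 * p / (real n * mu)))
     (max (sqrt (Lmax * w / (real n * p * mu)))
     (max (1/a) (max (1/tau) (max (w+1) (1/p)))))))))"
  unfolding T_iter_def by (rule Max10)

lemma Treal_expr: "T_realistic n d r w a Kw Ka mu L Lmax =
   max (sqrt (L * max (w + 1) (mu_r d r Kw Ka) / (a * mu)))
   (max (sqrt (Lmax * w * max (w + 1) (mu_r d r Kw Ka) / (real n * mu)))
   (max (1 / a) (max (w + 1) (mu_r d r Kw Ka))))"
  unfolding T_realistic_def by (rule Max5)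

lemma T_mono:
  assumes "0 < L" "L \<le> Lmax" "Lmax \<le> Lmax'" "0 < a" "0 < mu" "0 \<le> w" "0 < p" "0 < tau" "1 \<le> n"
  shows "T_iter n w a mu L p tau Lmax \<le> T_iter n w a mu L p tau Lmax'"
proof -
  have n0: "0 < real n" using assms by simp
  have s: "sqrt (L*Lmax) \<le> sqrt (L*Lmax')" using assms by (intro real_sqrt_le_mono mult_left_mono) auto
  have s0: "0 \<le> sqrt (w*tau)" "0 \<le> sqrt (w+1)" "0 \<le> w+1" using assms by auto
  have d3: "0 \<le> a * sqrt (real n) * mu" "0 \<le> a * sqrt p * sqrt (real n) * mu" "0 \<le> real n * mu"
    "0 \<le> real n * p * mu" using assms n0 by auto
  have A3: "sqrt (sqrt (L * Lmax) * (w + 1) * sqrt (w * tau) / (a * sqrt (real n) * mu))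
     \<le> sqrt (sqrt (L * Lmax') * (w + 1) * sqrt (w * tau) / (a * sqrt (real n) * mu))"
    by (rule real_sqrt_le_mono[OF divide_right_mono[OF mult_right_mono[OF mult_right_mono[OF s s0(3)] s0(1)] d3(1)]])
  have A4: "sqrt (sqrt (L * Lmax) * sqrt (w + 1) * sqrt (w * tau) / (a * sqrt p * sqrt (real n) * mu))
     \<le> sqrt (sqrt (L * Lmax') * sqrt (w + 1) * sqrt (w * tau) / (a * sqrt p * sqrt (real n) * mu))"
    by (rule real_sqrt_le_mono[OF divide_right_mono[OF mult_right_mono[OF mult_right_mono[OF s s0(2)] s0(1)] d3(2)]])
  have e: "0 \<le> w * (w + 1)^2 * p" "0 \<le> w" using assms by auto
  have A5: "sqrt (Lmax * w * (w + 1)^2 * p / (real n * mu)) \<le> sqrt (Lmax' * w * (w + 1)^2 * p / (real n * mu))"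
    using divide_right_mono[OF mult_right_mono[OF assms(3) e(1)] d3(3)]
    by (simp add: mult.assoc)
  have A6: "sqrt (Lmax * w / (real n * p * mu)) \<le> sqrt (Lmax' * w / (real n * p * mu))"
    using divide_right_mono[OF mult_right_mono[OF assms(3) e(2)] d3(4)] by simp
  show ?thesis unfolding T_expr
    by (rule max.mono[OF order_refl], rule max.mono[OF order_refl], rule max.mono[OF A3],
        rule max.mono[OF A4], rule max.mono[OF A5], rule max.mono[OF A6], rule order_refl)
qed

lemma T_nonneg:
  assumes "0 < a"
  shows "0 \<le> T_iter n w a mu L p tau Lmax"
proof -
  have "1/a \<le> T_iter n w a mu L p tau Lmax" unfolding T_expr
    by (rule max.coboundedI2, rule max.coboundedI2, rule max.coboundedI2, rule max.coboundedI2,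
        rule max.coboundedI2, rule max.coboundedI2, rule max.cobounded1)
  moreover have "0 < 1/a" using assms by simp
  ultimately show ?thesis by linarith
qed

lemma M_worst_eq:
  assumes "params_ok n d r w a Kw Ka mu L" "0 < p" "0 < tau"
  shows "M_worst n d r w a Kw Ka mu L p tau = M_comm n d r w a Kw Ka mu L p tau (real n * L)"
proof -
  have pk: "1 \<le> n" "0 \<le> r" "r \<le> 1" "0 \<le> w" "0 < a" "0 < Kw" "0 < Ka" "0 < mu" "mu \<le> L"
    using assms(1) unfolding params_ok_def by auto
  have L0: "0 < L" using pk by linarith
  have c0: "0 \<le> (1 - r) * Kw + r * (Ka + p * real d)" using pk assms(2)
    by (intro add_nonneg_nonneg mult_nonneg_nonneg) auto
  have nL: "L \<le> real n * L" using pk L0 by simp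
  show ?thesis unfolding M_worst_def
  proof (rule cSup_eq_maximum)
    show "M_comm n d r w a Kw Ka mu L p tau (real n * L)
      \<in> (\<lambda>Lmax. M_comm n d r w a Kw Ka mu L p tau Lmax) ` {L..real n * L}" using nL by auto
  next
    fix x assume "x \<in> (\<lambda>Lmax. M_comm n d r w a Kw Ka mu L p tau Lmax) ` {L..real n * L}"
    then obtain Lm where Lm: "L \<le> Lm" "Lm \<le> real n * L" "x = M_comm n d r w a Kw Ka mu L p tau Lm" by auto
    have "T_iter n w a mu L p tau Lm \<le> T_iter n w a mu L p tau (real n * L)"
      using Lm pk L0 assms by (intro T_mono) auto
    thus "x \<le> M_comm n d r w a Kw Ka mu L p tau (real n * L)" unfolding Lm(3) M_comm_def
      by (rule add_right_mono[OF mult_left_mono[OF _ c0]])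
  qed
qed

lemma setup_facts:
  assumes "params_ok n d r w a Kw Ka mu L"
  shows "0 < K_r r Kw Ka" "r * real d = mu_r d r Kw Ka * K_r r Kw Ka" "0 \<le> mu_r d r Kw Ka"
   "p_star d r w Kw Ka = 1 / max (w+1) (mu_r d r Kw Ka)"
   "0 < p_star d r w Kw Ka" "p_star d r w Kw Ka \<le> 1" "p_star d r w Kw Ka * (w+1) \<le> 1"
   "p_star d r w Kw Ka * mu_r d r Kw Ka \<le> 1"
   "p_star d r w Kw Ka \<le> tau_star d r w Kw Ka" "tau_star d r w Kw Ka * (w+1) \<le> 1"
   "0 < tau_star d r w Kw Ka" "tau_star d r w Kw Ka \<le> 1"
proof -
  have pk: "1 \<le> n" "0 \<le> r" "r \<le> 1" "0 \<le> w" "0 < a" "0 < Kw" "0 < Ka" "0 < mu" "mu \<le> L"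
    using assms(1) unfolding params_ok_def by auto
  have K0: "0 < (1 - r) * Kw + r * Ka"
  proof (cases "r = 0")
    case True thus ?thesis using pk by simp
  next
    case False
    hence "0 < r * Ka" using pk by simp
    moreover have "0 \<le> (1 - r) * Kw" using pk by simp
    ultimately show ?thesis by linarith
  qed
  show K: "0 < K_r r Kw Ka" unfolding K_r_def by (rule K0)
  show "r * real d = mu_r d r Kw Ka * K_r r Kw Ka" unfolding K_r_def mu_r_def using K0 by simp
  show m0: "0 \<le> mu_r d r Kw Ka" unfolding mu_r_def using K0 pk by simp
  define m where "m = mu_r d r Kw Ka"
  define P where "P = max (w+1) m"
  have P1: "w + 1 \<le> P" "m \<le> P" "0 < P" using pk m0 unfolding P_def m_def by auto
  have pse: "p_star d r w Kw Ka = (if m = 0 then 1/(w+1) else min (1/(w+1)) (1/m))"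
    unfolding p_star_def m_def ..
  have "p_star d r w Kw Ka = 1 / P"
  proof (cases "m = 0")
    case True thus ?thesis unfolding pse P_def using pk by simp
  next
    case False
    hence mp: "0 < m" using m0 m_def by simp
    show ?thesis
    proof (cases "m \<le> w + 1")
      case True
      hence "1/(w+1) \<le> 1/m" using mp by (simp add: frac_le)
      thus ?thesis unfolding pse P_def using True False by (simp add: min_def max_def)
    next
      case F: False
      hence "1/m \<le> 1/(w+1)" using pk by (simp add: frac_le)
      thus ?thesis unfolding pse P_def using F False by (simp add: min_def max_def)
    qed
  qed
  thus ps: "p_star d r w Kw Ka = 1 / max (w+1) (mu_r d r Kw Ka)" unfolding P_def m_def .
  have psP: "p_star d r w Kw Ka = 1/P" unfolding ps P_def m_def ..
  show "0 < p_star d r w Kw Ka" using psP P1 by simp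
  show p1: "p_star d r w Kw Ka \<le> 1" using psP P1 pk by simp
  show pw: "p_star d r w Kw Ka * (w+1) \<le> 1" using psP P1 by simp
  show "p_star d r w Kw Ka * mu_r d r Kw Ka \<le> 1" using psP P1 m_def by simp
  have tb: "p_star d r w Kw Ka \<le> tau_star d r w Kw Ka" "tau_star d r w Kw Ka * (w+1) \<le> 1"
     "0 < tau_star d r w Kw Ka"
    using tau_bounds[OF _ pw pk(4) tau_star_def] psP P1 by auto
  thus "p_star d r w Kw Ka \<le> tau_star d r w Kw Ka" "tau_star d r w Kw Ka * (w+1) \<le> 1"
     "0 < tau_star d r w Kw Ka" by auto
  show "tau_star d r w Kw Ka \<le> 1"
  proof -
    have "tau_star d r w Kw Ka * 1 \<le> tau_star d r w Kw Ka * (w+1)" using tb pk by (intro mult_left_mono) auto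
    thus ?thesis using tb by linarith
  qed
qed

lemma part2:
  assumes "params_ok n d r w a Kw Ka mu L" "L \<le> Lmax" "Lmax \<le> real n * L"
  shows "T_iter n w a mu L (p_star d r w Kw Ka) (tau_star d r w Kw Ka) Lmax = T_realistic n d r w a Kw Ka mu L Lmax"
proof -
  have pk: "1 \<le> n" "0 \<le> r" "r \<le> 1" "0 \<le> w" "0 < a" "0 < Kw" "0 < Ka" "0 < mu" "mu \<le> L"
    using assms(1) unfolding params_ok_def by auto
  note S = setup_facts[OF assms(1)]
  have N: "1 \<le> real n" using pk by simp
  have L0: "0 < L" using pk by linarith
  show ?thesis unfolding T_expr Treal_expr
    by (rule part2_core[OF N L0 assms(2) assms(3) pk(8) pk(5) pk(4) S(3) refl S(4) S(9) S(10)])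
qed

lemma M_comm_expr:
  assumes "params_ok n d r w a Kw Ka mu L"
  shows "M_comm n d r w a Kw Ka mu L p tau Lmax =
     K_r r Kw Ka * (1 + p * mu_r d r Kw Ka) * T_iter n w a mu L p tau Lmax + real d"
proof -
  have "(1 - r) * Kw + r * (Ka + p * real d) = K_r r Kw Ka + p * (r * real d)"
    unfolding K_r_def by (simp add: algebra_simps)
  also have "\<dots> = K_r r Kw Ka * (1 + p * mu_r d r Kw Ka)"
    unfolding setup_facts(2)[OF assms] by (simp add: algebra_simps)
  finally show ?thesis unfolding M_comm_def by simp
qed

lemma part3:
  assumes "params_ok n d r w a Kw Ka mu L" "L \<le> Lmax" "Lmax \<le> real n * L"
  shows "1 * (K_r r Kw Ka * T_realistic n d r w a Kw Ka mu L Lmax + real d)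
        \<le> M_comm n d r w a Kw Ka mu L (p_star d r w Kw Ka) (tau_star d r w Kw Ka) Lmax \<and>
      M_comm n d r w a Kw Ka mu L (p_star d r w Kw Ka) (tau_star d r w Kw Ka) Lmax
        \<le> 2 * (K_r r Kw Ka * T_realistic n d r w a Kw Ka mu L Lmax + real d)"
proof -
  have pk: "0 < a" using assms(1) unfolding params_ok_def by auto
  note S = setup_facts[OF assms(1)]
  define K where "K = K_r r Kw Ka"
  define T where "T = T_realistic n d r w a Kw Ka mu L Lmax"
  define q where "q = p_star d r w Kw Ka * mu_r d r Kw Ka"
  have T0: "0 \<le> T" unfolding T_def part2[OF assms, symmetric] using T_nonneg pk by blast
  have q: "0 \<le> q" "q \<le> 1" unfolding q_def using S by auto
  have K0: "0 < K" unfolding K_def using S by auto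
  have M: "M_comm n d r w a Kw Ka mu L (p_star d r w Kw Ka) (tau_star d r w Kw Ka) Lmax = K * (1 + q) * T + real d"
    unfolding M_comm_expr[OF assms(1)] part2[OF assms] K_def T_def q_def ..
  have KT: "0 \<le> K * T" using K0 T0 by simp
  have "K * (1+q) * T = K*T + q * (K*T)" by (simp add: algebra_simps)
  moreover have "q * (K*T) \<le> 1 * (K*T)" using q KT by (intro mult_right_mono) auto
  moreover have "0 \<le> q * (K*T)" using q KT by simp
  ultimately show ?thesis unfolding M K_def[symmetric] T_def[symmetric] by simp
qed

lemma lin4: "(x::real) \<le> 4 * y \<Longrightarrow> 0 \<le> dd \<Longrightarrow> x + dd \<le> 4 * (y + dd)"
  by (simp add: distrib_left)

lemma part1:
  assumes "params_ok n d r w a Kw Ka mu L" "0 < p" "p \<le> 1" "0 < tau" "tau \<le> 1"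
  shows "M_worst n d r w a Kw Ka mu L (p_star d r w Kw Ka) (tau_star d r w Kw Ka)
        \<le> 4 * M_worst n d r w a Kw Ka mu L p tau"
proof -
  have pk: "1 \<le> n" "0 \<le> r" "r \<le> 1" "0 \<le> w" "0 < a" "0 < Kw" "0 < Ka" "0 < mu" "mu \<le> L"
    using assms(1) unfolding params_ok_def by auto
  have L0: "0 < L" using pk by linarith
  have N: "1 \<le> real n" using pk by simp
  have nL: "L \<le> real n * L" "real n * L \<le> real n * L" using pk L0 by auto
  note S = setup_facts[OF assms(1)]
  define K where "K = K_r r Kw Ka"
  define m where "m = mu_r d r Kw Ka"
  define TR where "TR = T_realistic n d r w a Kw Ka mu L (real n * L)"
  define Tv where "Tv = T_iter n w a mu L p tau (real n * L)"
  define q where "q = p_star d r w Kw Ka * m"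
  have q: "0 \<le> q" "q \<le> 1" unfolding q_def m_def using S by auto
  have K0: "0 < K" unfolding K_def using S by auto
  have TR0: "0 \<le> TR" unfolding TR_def part2[OF assms(1) nL, symmetric] by (rule T_nonneg[OF pk(5)])
  have W1: "M_worst n d r w a Kw Ka mu L (p_star d r w Kw Ka) (tau_star d r w Kw Ka) = K * (1 + q) * TR + real d"
    unfolding M_worst_eq[OF assms(1) S(5) S(11)] M_comm_expr[OF assms(1)] part2[OF assms(1) nL]
      K_def TR_def q_def m_def by (rule refl)
  have W2: "M_worst n d r w a Kw Ka mu L p tau = K * (1 + p * m) * Tv + real d"
    unfolding M_worst_eq[OF assms(1) assms(2) assms(4)] M_comm_expr[OF assms(1)] K_def Tv_def m_def by (rule refl)
  have core: "TR \<le> 2 * (1 + p*m) * Tv"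
    unfolding TR_def Tv_def Treal_expr T_expr m_def
    by (rule part1_core[OF N L0 pk(8) pk(5) pk(4) S(3) refl assms(2-5) refl])
  have c1: "K * (1 + q) \<le> K * 2" using K0 q by (intro mult_left_mono) auto
  have "K * (1 + q) * TR \<le> K * 2 * TR" by (rule mult_right_mono[OF c1 TR0])
  also have "\<dots> \<le> K * 2 * (2 * (1 + p*m) * Tv)" using K0 by (intro mult_left_mono[OF core]) simp
  also have "\<dots> = 4 * (K * (1 + p * m) * Tv)" by (simp add: algebra_simps)
  finally have "K * (1 + q) * TR \<le> 4 * (K * (1 + p * m) * Tv)" .
  thus ?thesis unfolding W1 W2 by (rule lin4) simp
qed

theorem theorem2:
  shows
  "(\<exists>C>0. \<forall>n d r w a Kw Ka mu L p tau.
      params_ok n d r w a Kw Ka mu L \<and> 0 < p \<and> p \<le> 1 \<and> 0 < tau \<and> tau \<le> 1 \<longrightarrow>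
      M_worst n d r w a Kw Ka mu L (p_star d r w Kw Ka) (tau_star d r w Kw Ka)
        \<le> C * M_worst n d r w a Kw Ka mu L p tau)
   \<and> (\<exists>c1>0. \<exists>c2>0. \<forall>n d r w a Kw Ka mu L Lmax.
      params_ok n d r w a Kw Ka mu L \<and> L \<le> Lmax \<and> Lmax \<le> real n * L \<longrightarrow>
      c1 * T_realistic n d r w a Kw Ka mu L Lmax
        \<le> T_iter n w a mu L (p_star d r w Kw Ka) (tau_star d r w Kw Ka) Lmax \<and>
      T_iter n w a mu L (p_star d r w Kw Ka) (tau_star d r w Kw Ka) Lmax
        \<le> c2 * T_realistic n d r w a Kw Ka mu L Lmax)
   \<and> (\<exists>c1>0. \<exists>c2>0. \<forall>n d r w a Kw Ka mu L Lmax.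
      params_ok n d r w a Kw Ka mu L \<and> L \<le> Lmax \<and> Lmax \<le> real n * L \<longrightarrow>
      c1 * (K_r r Kw Ka * T_realistic n d r w a Kw Ka mu L Lmax + real d)
        \<le> M_comm n d r w a Kw Ka mu L (p_star d r w Kw Ka) (tau_star d r w Kw Ka) Lmax \<and>
      M_comm n d r w a Kw Ka mu L (p_star d r w Kw Ka) (tau_star d r w Kw Ka) Lmax
        \<le> c2 * (K_r r Kw Ka * T_realistic n d r w a Kw Ka mu L Lmax + real d))"
proof (intro conjI)
  show "\<exists>C>0. \<forall>n d r w a Kw Ka mu L p tau.
      params_ok n d r w a Kw Ka mu L \<and> 0 < p \<and> p \<le> 1 \<and> 0 < tau \<and> tau \<le> 1 \<longrightarrow>
      M_worst n d r w a Kw Ka mu L (p_star d r w Kw Ka) (tau_star d r w Kw Ka)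
        \<le> C * M_worst n d r w a Kw Ka mu L p tau"
    apply (rule exI[of _ "4::real"], rule conjI, simp)
    apply (intro allI impI, elim conjE)
    apply (rule part1)
    apply assumption+
    done
next
  show "\<exists>c1>0. \<exists>c2>0. \<forall>n d r w a Kw Ka mu L Lmax.
      params_ok n d r w a Kw Ka mu L \<and> L \<le> Lmax \<and> Lmax \<le> real n * L \<longrightarrow>
      c1 * T_realistic n d r w a Kw Ka mu L Lmax
        \<le> T_iter n w a mu L (p_star d r w Kw Ka) (tau_star d r w Kw Ka) Lmax \<and>
      T_iter n w a mu L (p_star d r w Kw Ka) (tau_star d r w Kw Ka) Lmax
        \<le> c2 * T_realistic n d r w a Kw Ka mu L Lmax"
    apply (rule exI[of _ "1::real"], rule conjI, simp)
    apply (rule exI[of _ "1::real"], rule conjI, simp)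
    apply (intro allI impI, elim conjE)
    apply (simp only: part2 mult_1 order_refl conj_absorb)
    done
next
  show "\<exists>c1>0. \<exists>c2>0. \<forall>n d r w a Kw Ka mu L Lmax.
      params_ok n d r w a Kw Ka mu L \<and> L \<le> Lmax \<and> Lmax \<le> real n * L \<longrightarrow>
      c1 * (K_r r Kw Ka * T_realistic n d r w a Kw Ka mu L Lmax + real d)
        \<le> M_comm n d r w a Kw Ka mu L (p_star d r w Kw Ka) (tau_star d r w Kw Ka) Lmax \<and>
      M_comm n d r w a Kw Ka mu L (p_star d r w Kw Ka) (tau_star d r w Kw Ka) Lmax
        \<le> c2 * (K_r r Kw Ka * T_realistic n d r w a Kw Ka mu L Lmax + real d)"
    apply (rule exI[of _ "1::real"], rule conjI, simp)
    apply (rule exI[of _ "2::real"], rule conjI, simp)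
    apply (intro allI impI, elim conjE)
    apply (rule part3)
    apply assumption+
    done
qed
end
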